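(* There is an absolute constant $C>0$ such that the following holds. Let $X_1,X_2,\ldots$ be independent with density $e^{x-1}$ for $x\le1$ and $0$ for $x>1$; $S_0=0$, $S_j=X_1+\cdots+X_j$; $f_m(x)=\frac{(m-x)^{m-1}}{e^{m-x}(m-1)!}$ for $x\le m$ and $f_m(x)=0$ for $x>m$ (the density of $S_m$); and $R_m(x,y)=\frac{d}{dx}\mathbf{P}[\max_{0\le j\le m-1}S_j<y,\ S_m\le x]$. Then for every integer $k\ge1$, real $y\ge0$ and real $0\le\mu\le1$, $$R_k(y+\mu,y)\le C\,\frac{y+1}{k}\,f_k(y).$$ *)

theory Defs
  imports "HOL-Probability.Probability"
begin

definition step_density :: "real \<Rightarrow> real" where
  "step_density x = (if x \<le> 1 then exp (x - 1) else 0)"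

definition step_dist :: "real measure" where
  "step_dist = density lborel (\<lambda>x. ennreal (step_density x))"

text \<open>Joint law of (X_1,...,X_m), indexed by 0..m-1 (independent, i.e. product measure).\<close>
definition walk_space :: "nat \<Rightarrow> (nat \<Rightarrow> real) measure" where
  "walk_space m = PiM {..<m} (\<lambda>_. step_dist)"

definition partial_sum :: "(nat \<Rightarrow> real) \<Rightarrow> nat \<Rightarrow> real" where
  "partial_sum \<omega> j = (\<Sum>i<j. \<omega> i)"

definition walk_cdf :: "nat \<Rightarrow> real \<Rightarrow> real \<Rightarrow> real" where
  "walk_cdf m y x = measure (walk_space m)
     {\<omega> \<in> space (walk_space m). (\<forall>j<m. partial_sum \<omega> j < y) \<and> partial_sum \<omega> m \<le> x}"

definition f_dens :: "nat \<Rightarrow> real \<Rightarrow> real" where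
  "f_dens m x = (if x \<le> real m
     then (real m - x) ^ (m - 1) / (exp (real m - x) * fact (m - 1)) else 0)"

end

theory Submission
  imports Defs
begin

lemma step_density_nonneg: "0 \<le> step_density x"
  by (simp add: step_density_def)

lemma step_density_le1: "step_density x \<le> 1"
  by (simp add: step_density_def)

lemma step_density_borel[measurable]: "step_density \<in> borel_measurable borel"
  unfolding step_density_def by measurable

lemma step_density_refl: "step_density x = exponential_density 1 (1 - x)"
  by (simp add: step_density_def exponential_density_def)

lemma prob_space_step: "prob_space step_dist"
proof
  have "emeasure step_dist (space step_dist) = (\<integral>\<^sup>+x. ennreal (step_density x) \<partial>lborel)"
    unfolding step_dist_def by (simp add: emeasure_density)
  also have "\<dots> = (\<integral>\<^sup>+x. ennreal (exponential_density 1 (1 + (-1) * x)) \<partial>lborel)"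
    by (simp add: step_density_refl)
  also have "\<dots> = (\<integral>\<^sup>+x. ennreal (exponential_density 1 x) \<partial>lborel)"
    by (subst nn_integral_real_affine[where c="-1" and t=1]) auto
  also have "\<dots> = emeasure (density lborel (exponential_density 1)) (space (density lborel (exponential_density 1)))"
    by (simp add: emeasure_density)
  also have "\<dots> = 1"
    using prob_space.emeasure_space_1[OF prob_space_exponential_density[of 1]] by simp
  finally show "emeasure step_dist (space step_dist) = 1" .
qed

interpretation step: prob_space step_dist by (rule prob_space_step)

lemma space_step[simp]: "space step_dist = UNIV"
  by (simp add: step_dist_def)
lemma sets_step[simp, measurable_cong]: "sets step_dist = sets borel"
  by (simp add: step_dist_def)

lemma prob_space_walk: "prob_space (walk_space m)"
  unfolding walk_space_def by (rule prob_space_PiM) (rule prob_space_step)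

interpretation PS: product_sigma_finite "\<lambda>_::nat. step_dist"
  by unfold_locales

lemma nn_step: "f \<in> borel_measurable borel \<Longrightarrow> (\<integral>\<^sup>+u. f u \<partial>step_dist) = (\<integral>\<^sup>+u. ennreal (step_density u) * f u \<partial>lborel)"
  unfolding step_dist_def by (simp add: nn_integral_density)

lemma ps_meas[measurable]: "j \<le> m \<Longrightarrow> (\<lambda>w. partial_sum w j) \<in> borel_measurable (walk_space m)"
  unfolding partial_sum_def walk_space_def
  by (intro borel_measurable_sum) (auto intro!: measurable_component_singleton[where M="\<lambda>_. step_dist", simplified])

lemma walk_split:
  assumes [measurable]: "F \<in> borel_measurable (walk_space (Suc m))"
  shows "(\<integral>\<^sup>+w. F w \<partial>walk_space (Suc m)) = (\<integral>\<^sup>+w. (\<integral>\<^sup>+u. F (w(m := u)) \<partial>step_dist) \<partial>walk_space m)"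
proof -
  have e: "{..<Suc m} = insert m {..<m}" by auto
  show ?thesis
    using PS.product_nn_integral_insert[of "{..<m}" m F] assms
    unfolding walk_space_def e by simp
qed

lemma ps_upd_le: "j \<le> m \<Longrightarrow> partial_sum (w(m := u)) j = partial_sum w j"
  unfolding partial_sum_def by (intro sum.cong) auto

lemma ps_upd_Suc: "partial_sum (w(m := u)) (Suc m) = partial_sum w m + u"
  unfolding partial_sum_def by (simp add: ps_upd_le[unfolded partial_sum_def])

lemma f_dens_1: "f_dens 1 s = step_density s"
  by (simp add: f_dens_def step_density_def exp_diff exp_minus field_simps)

lemma f_dens_nonneg: "0 \<le> f_dens m s"
  by (simp add: f_dens_def)

lemma f_dens_borel[measurable]: "f_dens m \<in> borel_measurable borel"
  unfolding f_dens_def by measurable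

lemma conv_pointwise:
  "ennreal (f_dens (Suc n) z) * ennreal (step_density (w - z)) =
   ennreal (exp (w - real n - 2) * (real n + 1 - z) ^ n / fact n) * indicator {w - 1 .. real n + 1} z"
proof (cases "w - 1 \<le> z \<and> z \<le> real n + 1")
  case True
  have e: "exp (w - z - 1) / exp (real n + 1 - z) = exp (w - real n - 2)"
    by (simp add: exp_diff[symmetric])
  have "f_dens (Suc n) z * step_density (w - z) = (real n + 1 - z) ^ n / fact n * (exp (w - z - 1) / exp (real n + 1 - z))"
    using True by (simp add: f_dens_def step_density_def field_simps add.commute)
  then have "f_dens (Suc n) z * step_density (w - z) = exp (w - real n - 2) * (real n + 1 - z) ^ n / fact n"
    by (simp add: e)
  then show ?thesis using True
    by (simp add: ennreal_mult'[symmetric] f_dens_nonneg)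
next
  case False
  then have "f_dens (Suc n) z = 0 \<or> step_density (w - z) = 0"
    by (auto simp: f_dens_def step_density_def add.commute)
  then show ?thesis using False by auto
qed

lemma conv:
  "(\<integral>\<^sup>+z. ennreal (f_dens (Suc n) z) * ennreal (step_density (w - z)) \<partial>lborel) = ennreal (f_dens (Suc (Suc n)) w)"
proof (cases "w - 1 \<le> real n + 1")
  case True
  let ?f = "\<lambda>z. exp (w - real n - 2) * (real n + 1 - z) ^ n / fact n"
  let ?F = "\<lambda>z. - (exp (w - real n - 2) * (real n + 1 - z) ^ Suc n / fact (Suc n))"
  have d: "DERIV ?F z :> ?f z" for z
  proof -
    have "DERIV ?F z :> - (exp (w - real n - 2) * (real (Suc n) * (real n + 1 - z) ^ n * (0 - 1)) / fact (Suc n))"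
      by (intro derivative_eq_intros) auto
    moreover have "- (exp (w - real n - 2) * (real (Suc n) * (real n + 1 - z) ^ n * (0 - 1)) / fact (Suc n)) = ?f z"
    proof -
      have "(0::real) < fact n" by simp
      then show ?thesis by (simp add: fact_Suc divide_simps)
    qed
    ultimately show ?thesis by simp
  qed
  have "(\<integral>\<^sup>+z. ennreal (f_dens (Suc n) z) * ennreal (step_density (w - z)) \<partial>lborel)
      = (\<integral>\<^sup>+z. ennreal (?f z) * indicator {w - 1 .. real n + 1} z \<partial>lborel)"
    by (simp add: conv_pointwise)
  also have "\<dots> = ?F (real n + 1) - ?F (w - 1)"
    by (rule nn_integral_FTC_Icc[OF _ d]) (use True in auto)
  also have "?F (real n + 1) - ?F (w - 1) = f_dens (Suc (Suc n)) w"
    using True by (simp add: f_dens_def exp_diff field_simps)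
  finally show ?thesis .
next
  case False
  then have "(\<integral>\<^sup>+z. ennreal (f_dens (Suc n) z) * ennreal (step_density (w - z)) \<partial>lborel) = 0"
    by (simp add: conv_pointwise)
  moreover have "f_dens (Suc (Suc n)) w = 0" using False by (simp add: f_dens_def)
  ultimately show ?thesis by simp
qed

lemma ps_density_Suc:
  "g \<in> borel_measurable borel \<Longrightarrow>
   (\<integral>\<^sup>+w. g (partial_sum w (Suc n)) \<partial>walk_space (Suc n)) = (\<integral>\<^sup>+s. ennreal (f_dens (Suc n) s) * g s \<partial>lborel)"
proof (induction n arbitrary: g)
  case 0
  note [measurable] = 0
  have e: "{..<Suc 0} = {0::nat}" by auto
  have "(\<integral>\<^sup>+w. g (partial_sum w (Suc 0)) \<partial>walk_space (Suc 0)) = (\<integral>\<^sup>+w. g (w 0) \<partial>PiM {0::nat} (\<lambda>_. step_dist))"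
  proof -
    have "walk_space (Suc 0) = PiM {0} (\<lambda>_. step_dist)" unfolding walk_space_def e ..
    moreover have "\<And>w. partial_sum w (Suc 0) = w 0" by (simp add: partial_sum_def)
    ultimately show ?thesis by simp
  qed
  also have "\<dots> = (\<integral>\<^sup>+u. g u \<partial>step_dist)"
    by (rule PS.product_nn_integral_singleton) simp
  also have "\<dots> = (\<integral>\<^sup>+s. ennreal (f_dens (Suc 0) s) * g s \<partial>lborel)"
    by (simp add: nn_step f_dens_1[simplified])
  finally show ?case .
next
  case (Suc n)
  note [measurable] = Suc.prems
  define \<Phi> where "\<Phi> z = (\<integral>\<^sup>+u. ennreal (step_density u) * g (z + u) \<partial>lborel)" for z
  have \<Phi>m[measurable]: "\<Phi> \<in> borel_measurable borel"
    unfolding \<Phi>_def by measurable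
  have "(\<integral>\<^sup>+w. g (partial_sum w (Suc (Suc n))) \<partial>walk_space (Suc (Suc n)))
     = (\<integral>\<^sup>+w. (\<integral>\<^sup>+u. g (partial_sum (w(Suc n := u)) (Suc (Suc n))) \<partial>step_dist) \<partial>walk_space (Suc n))"
    by (rule walk_split) measurable
  also have "\<dots> = (\<integral>\<^sup>+w. \<Phi> (partial_sum w (Suc n)) \<partial>walk_space (Suc n))"
    by (simp add: ps_upd_Suc \<Phi>_def nn_step)
  also have "\<dots> = (\<integral>\<^sup>+z. ennreal (f_dens (Suc n) z) * \<Phi> z \<partial>lborel)"
    by (rule Suc.IH) measurable
  also have "\<dots> = (\<integral>\<^sup>+z. (\<integral>\<^sup>+x. ennreal (f_dens (Suc n) z) * (ennreal (step_density (x - z)) * g x) \<partial>lborel) \<partial>lborel)"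
  proof (intro nn_integral_cong)
    fix z
    have "\<Phi> z = (\<integral>\<^sup>+x. ennreal (step_density (x - z)) * g x \<partial>lborel)"
      unfolding \<Phi>_def
      by (subst nn_integral_real_affine[where c=1 and t=z]) (auto simp: add.commute)
    then show "ennreal (f_dens (Suc n) z) * \<Phi> z = (\<integral>\<^sup>+x. ennreal (f_dens (Suc n) z) * (ennreal (step_density (x - z)) * g x) \<partial>lborel)"
      by (simp add: nn_integral_cmult)
  qed
  also have "\<dots> = (\<integral>\<^sup>+x. (\<integral>\<^sup>+z. ennreal (f_dens (Suc n) z) * (ennreal (step_density (x - z)) * g x) \<partial>lborel) \<partial>lborel)"
    by (rule lborel_pair.Fubini'[symmetric]) measurable
  also have "\<dots> = (\<integral>\<^sup>+x. ennreal (f_dens (Suc (Suc n)) x) * g x \<partial>lborel)"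
  proof (intro nn_integral_cong)
    fix x
    have "(\<integral>\<^sup>+z. ennreal (f_dens (Suc n) z) * (ennreal (step_density (x - z)) * g x) \<partial>lborel)
        = (\<integral>\<^sup>+z. (ennreal (f_dens (Suc n) z) * ennreal (step_density (x - z))) * g x \<partial>lborel)"
      by (simp add: mult.assoc)
    also have "\<dots> = (\<integral>\<^sup>+z. ennreal (f_dens (Suc n) z) * ennreal (step_density (x - z)) \<partial>lborel) * g x"
      by (rule nn_integral_multc) measurable
    also have "\<dots> = ennreal (f_dens (Suc (Suc n)) x) * g x"
      by (simp add: conv)
    finally show "(\<integral>\<^sup>+z. ennreal (f_dens (Suc n) z) * (ennreal (step_density (x - z)) * g x) \<partial>lborel) = ennreal (f_dens (Suc (Suc n)) x) * g x" .
  qed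
  finally show ?case .
qed

lemma ps_density:
  assumes "1 \<le> m" "g \<in> borel_measurable borel"
  shows "(\<integral>\<^sup>+w. g (partial_sum w m) \<partial>walk_space m) = (\<integral>\<^sup>+s. ennreal (f_dens m s) * g s \<partial>lborel)"
  using ps_density_Suc[of g "m - 1"] assms by simp

definition rot :: "nat \<Rightarrow> nat \<Rightarrow> (nat \<Rightarrow> real) \<Rightarrow> (nat \<Rightarrow> real)" where
  "rot m r w = (\<lambda>i\<in>{..<m}. w ((i + r) mod m))"

definition gap :: "nat \<Rightarrow> (nat \<Rightarrow> real) \<Rightarrow> real" where
  "gap m w = partial_sum w m - Max ((\<lambda>j. partial_sum w j) ` {..<m})"

lemma ps_rot: "j \<le> m \<Longrightarrow> partial_sum (rot m r w) j = (\<Sum>i<r+j. w (i mod m)) - (\<Sum>i<r. w (i mod m))"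
proof (induction j)
  case 0 then show ?case by (simp add: partial_sum_def)
next
  case (Suc j)
  then have "partial_sum (rot m r w) (Suc j) = partial_sum (rot m r w) j + w ((j + r) mod m)"
    by (simp add: partial_sum_def rot_def)
  then show ?case using Suc by (simp add: add.commute)
qed

lemma T_period: "(\<Sum>i<n+m. w (i mod m)) = (\<Sum>i<n. w (i mod m)) + partial_sum w m"
proof (induction n)
  case 0 then show ?case by (simp add: partial_sum_def)
next
  case (Suc n)
  have "(\<Sum>i<Suc n+m. w (i mod m)) = (\<Sum>i<n+m. w (i mod m)) + w ((n + m) mod m)" by simp
  then show ?case using Suc by simp
qed

lemma ps_rot_m: "partial_sum (rot m r w) m = partial_sum w m"
  using ps_rot[of m m r w] T_period[where n=r and m=m and w=w] by simp

lemma max_arith: "(a::real) < b \<Longrightarrow> max 0 (b - max a c) = max b c - max a c"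
  by (auto simp: max_def)

lemma cycle:
  assumes m: "0 < m" and x: "0 < partial_sum w m"
  shows "(\<Sum>r<m. max 0 (gap m (rot m r w))) = partial_sum w m"
proof -
  define T where "T n = (\<Sum>i<n. w (i mod m))" for n
  define A where "A r = Max ((\<lambda>j. T (r + j)) ` {..<m})" for r
  obtain n where n: "m = Suc n" using m by (cases m) auto
  have ne: "{..<m} \<noteq> {}" using n by auto
  have Tp: "T (n + m) = T n + partial_sum w m" for n
    unfolding T_def by (rule T_period)
  have g: "gap m (rot m r w) = T (r + m) - A r" for r
  proof -
    have "(\<lambda>j. partial_sum (rot m r w) j) ` {..<m} = (\<lambda>j. T (r + j) + (- T r)) ` {..<m}"
      by (intro image_cong) (auto simp: ps_rot T_def)
    then have "Max ((\<lambda>j. partial_sum (rot m r w) j) ` {..<m}) = A r - T r"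
      unfolding A_def using ne Max_add_commute[of "{..<m}" "\<lambda>j. T (r+j)" "- T r"] by simp
    then show ?thesis unfolding gap_def using ps_rot[of m m r w] by (simp add: T_def)
  qed
  have step: "max 0 (T (r + m) - A r) = A (Suc r) - A r" for r
  proof -
    have lt: "T r < T (r + m)" using Tp[of r] x by simp
    show ?thesis
    proof (cases "n = 0")
      case True
      then show ?thesis using lt unfolding A_def n by (simp add: lessThan_Suc)
    next
      case False
      define C where "C = Max ((\<lambda>j. T (r + Suc j)) ` {..<n})"
      have e1: "{..<Suc n} = insert 0 (Suc ` {..<n})" by (rule lessThan_Suc_eq_insert_0)
      have "A r = Max (insert (T r) ((\<lambda>j. T (r + j)) ` Suc ` {..<n}))"
        unfolding A_def n e1 by simp
      also have "\<dots> = max (T r) C"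
        using False unfolding C_def by (subst Max_insert) (auto simp: image_image)
      finally have Ar: "A r = max (T r) C" .
      have "A (Suc r) = Max (insert (T (Suc r + n)) ((\<lambda>j. T (Suc r + j)) ` {..<n}))"
        unfolding A_def n by (simp add: lessThan_Suc)
      also have "\<dots> = max (T (r + m)) C"
        using False unfolding C_def n by (subst Max_insert) auto
      finally have Ar1: "A (Suc r) = max (T (r + m)) C" .
      show ?thesis unfolding Ar Ar1 using lt by (rule max_arith)
    qed
  qed
  have "(\<Sum>r<m. max 0 (gap m (rot m r w))) = (\<Sum>r<m. A (Suc r) - A r)"
    by (intro sum.cong) (auto simp: g step)
  also have "\<dots> = A m - A 0" by (rule sum_lessThan_telescope)
  also have "A m = A 0 + partial_sum w m"
  proof -
    have "(\<lambda>j. T (m + j)) ` {..<m} = (\<lambda>j. T j + partial_sum w m) ` {..<m}"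
      using Tp by (auto simp: add.commute)
    then show ?thesis unfolding A_def using ne Max_add_commute[of "{..<m}" "\<lambda>j. T j" "partial_sum w m"] by simp
  qed
  finally show ?thesis by simp
qed

lemma rot_idx:
  fixes i m r :: nat
  assumes i: "i < m"
  shows "(i + r) mod m = (if i + r mod m < m then i + r mod m else i + r mod m - m)"
proof -
  have s: "r mod m < m" using i by (intro mod_less_divisor) simp
  have "(i + r) mod m = (i + r mod m) mod m" by (simp add: mod_add_right_eq)
  also have "\<dots> = (if i + r mod m < m then i + r mod m else i + r mod m - m)"
  proof (cases "i + r mod m < m")
    case True then show ?thesis by simp
  next
    case False
    then have "(i + r mod m) mod m = (i + r mod m - m) mod m" by (simp add: le_mod_geq)
    also have "\<dots> = i + r mod m - m" using i s by (intro mod_less) linarith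
    finally show ?thesis using False by simp
  qed
  finally show ?thesis .
qed

lemma rot_inj: "inj_on (\<lambda>i::nat. (i + r) mod m) {..<m}"
proof (rule inj_onI)
  fix i j assume "i \<in> {..<m}" "j \<in> {..<m}" "(i + r) mod m = (j + r) mod m"
  then show "i = j" using rot_idx[of i m r] rot_idx[of j m r]
    by (auto split: if_splits)
qed

lemma rot_meas[measurable]: "rot m r \<in> measurable (walk_space m) (walk_space m)"
  unfolding rot_def walk_space_def
  by (intro measurable_restrict measurable_component_singleton) auto

lemma rot_distr: "distr (walk_space m) (walk_space m) (rot m r) = walk_space m"
proof -
  have "rot m r = (\<lambda>w. \<lambda>n\<in>{..<m}. w ((n + r) mod m))"
    by (simp add: rot_def fun_eq_iff)
  then show ?thesis
    using distr_PiM_reindex[of "{..<m}" "\<lambda>_. step_dist" "\<lambda>i. (i + r) mod m" "{..<m}"] rot_inj[of r m]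
      prob_space_step unfolding walk_space_def by auto
qed

lemma rot_nn_integral:
  assumes [measurable]: "F \<in> borel_measurable (walk_space m)"
  shows "(\<integral>\<^sup>+w. F (rot m r w) \<partial>walk_space m) = (\<integral>\<^sup>+w. F w \<partial>walk_space m)"
proof -
  have "(\<integral>\<^sup>+w. F (rot m r w) \<partial>walk_space m) = (\<integral>\<^sup>+w. F w \<partial>distr (walk_space m) (walk_space m) (rot m r))"
    by (rule nn_integral_distr[symmetric]) measurable
  then show ?thesis by (simp add: rot_distr)
qed

lemma gap_meas[measurable]: "gap m \<in> borel_measurable (walk_space m)"
  unfolding gap_def by measurable auto

lemma gap_identity:
  assumes m: "0 < m" and J: "J \<subseteq> {0<..}" and Jm[measurable]: "J \<in> sets borel"
  shows "of_nat m * (\<integral>\<^sup>+w. ennreal (max 0 (gap m w)) * indicator J (partial_sum w m) \<partial>walk_space m)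
       = (\<integral>\<^sup>+w. ennreal (partial_sum w m) * indicator J (partial_sum w m) \<partial>walk_space m)"
proof -
  define G where "G w = ennreal (max 0 (gap m w)) * indicator J (partial_sum w m)" for w
  have Gm[measurable]: "G \<in> borel_measurable (walk_space m)"
    unfolding G_def by measurable
  have "of_nat m * (\<integral>\<^sup>+w. G w \<partial>walk_space m) = (\<Sum>r<m. (\<integral>\<^sup>+w. G w \<partial>walk_space m))"
    by simp
  also have "\<dots> = (\<Sum>r<m. (\<integral>\<^sup>+w. G (rot m r w) \<partial>walk_space m))"
    by (intro sum.cong refl rot_nn_integral[symmetric] Gm)
  also have "\<dots> = (\<integral>\<^sup>+w. (\<Sum>r<m. G (rot m r w)) \<partial>walk_space m)"
    by (rule nn_integral_sum[symmetric]) measurable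
  also have "\<dots> = (\<integral>\<^sup>+w. ennreal (partial_sum w m) * indicator J (partial_sum w m) \<partial>walk_space m)"
  proof (intro nn_integral_cong)
    fix w
    show "(\<Sum>r<m. G (rot m r w)) = ennreal (partial_sum w m) * indicator J (partial_sum w m)"
    proof (cases "partial_sum w m \<in> J")
      case True
      then have pos: "0 < partial_sum w m" using J by auto
      have "(\<Sum>r<m. G (rot m r w)) = (\<Sum>r<m. ennreal (max 0 (gap m (rot m r w))))"
        using True by (simp add: G_def ps_rot_m)
      also have "\<dots> = ennreal (\<Sum>r<m. max 0 (gap m (rot m r w)))"
        by (rule sum_ennreal) simp
      also have "\<dots> = ennreal (partial_sum w m)" using cycle[OF m pos] by simp
      finally show ?thesis using True by simp
    next
      case False
      then show ?thesis by (simp add: G_def ps_rot_m)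
    qed
  qed
  finally show ?thesis unfolding G_def .
qed


lemma space_walk: "space (walk_space m) = PiE {..<m} (\<lambda>_. UNIV)"
  by (simp add: walk_space_def space_PiM)

lemma upd_space: "w \<in> space (walk_space n) \<Longrightarrow> w(n := u) \<in> space (walk_space (Suc n))"
  unfolding space_walk lessThan_Suc by (rule PiE_fun_upd) auto

lemma pred_below: "l \<le> Suc m \<Longrightarrow> Measurable.pred (walk_space m) (\<lambda>w. \<forall>j<l. partial_sum w j < y)"
proof -
  assume l: "l \<le> Suc m"
  have "Measurable.pred (walk_space m) (\<lambda>w. \<forall>j\<in>{..<l}. partial_sum w j < y)"
  proof (rule pred_intros_finite(3))
    show "finite {..<l}" by simp
    fix i assume "i \<in> {..<l}"
    then have i: "i \<le> m" using l by auto
    show "Measurable.pred (walk_space m) (\<lambda>w. partial_sum w i < y)"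
      by (rule pred_less_const[OF ps_meas[OF i]]) simp
  qed
  then show ?thesis by (simp only: lessThan_iff Ball_def)
qed

lemma inner_bound:
  assumes "a \<le> b"
  shows "(\<integral>\<^sup>+u. indicator {a<..b} (z + u) \<partial>step_dist) \<le> ennreal (b - a) * indicator {a - 1<..} z"
proof (cases "a - 1 < z")
  case True
  have "(\<integral>\<^sup>+u. indicator {a<..b} (z + u) \<partial>step_dist) = (\<integral>\<^sup>+u. ennreal (step_density u) * indicator {a<..b} (z + u) \<partial>lborel)"
    by (rule nn_step) measurable
  also have "\<dots> \<le> (\<integral>\<^sup>+u. indicator {a - z<..b - z} u \<partial>lborel)"
    by (intro nn_integral_mono) (auto simp: step_density_le1 split: split_indicator)
  also have "\<dots> = ennreal (b - a)" using assms by simp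
  finally show ?thesis using True by simp
next
  case False
  have "(\<integral>\<^sup>+u. indicator {a<..b} (z + u) \<partial>step_dist) = (\<integral>\<^sup>+u. ennreal (step_density u) * indicator {a<..b} (z + u) \<partial>lborel)"
    by (rule nn_step) measurable
  also have "\<dots> = (\<integral>\<^sup>+u. (0::ennreal) \<partial>(lborel::real measure))"
    by (intro nn_integral_cong) (use False in \<open>auto simp: step_density_def split: split_indicator\<close>)
  finally show ?thesis by simp
qed

lemma last_step:
  assumes ab: "a \<le> b"
  shows "emeasure (walk_space (Suc n)) {w \<in> space (walk_space (Suc n)). (\<forall>j<Suc n. partial_sum w j < y) \<and> partial_sum w (Suc n) \<in> {a<..b}}
     \<le> ennreal (b - a) * emeasure (walk_space n) {w \<in> space (walk_space n). (\<forall>j<Suc n. partial_sum w j < y) \<and> a - 1 < partial_sum w n}"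
    (is "emeasure _ ?E \<le> _ * emeasure _ ?G")
proof -
  have [measurable]: "Measurable.pred (walk_space (Suc n)) (\<lambda>w. \<forall>j<Suc n. partial_sum w j < y)"
    by (rule pred_below) simp
  have [measurable]: "Measurable.pred (walk_space n) (\<lambda>w. \<forall>j<Suc n. partial_sum w j < y)"
    by (rule pred_below) simp
  have Em: "?E \<in> sets (walk_space (Suc n))" by measurable
  have Gm: "?G \<in> sets (walk_space n)" by measurable
  have "emeasure (walk_space (Suc n)) ?E = (\<integral>\<^sup>+w. indicator ?E w \<partial>walk_space (Suc n))"
    using Em by simp
  also have "\<dots> = (\<integral>\<^sup>+w. (\<integral>\<^sup>+u. indicator ?E (w(n := u)) \<partial>step_dist) \<partial>walk_space n)"
    by (rule walk_split) (use Em in simp)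
  also have "\<dots> \<le> (\<integral>\<^sup>+w. ennreal (b - a) * indicator ?G w \<partial>walk_space n)"
  proof (intro nn_integral_mono)
    fix w assume w: "w \<in> space (walk_space n)"
    define c where "c = (if \<forall>j<Suc n. partial_sum w j < y then 1 else (0::ennreal))"
    have e: "indicator ?E (w(n := u)) = c * indicator {a<..b} (partial_sum w n + u)" for u :: real
    proof -
      have "w(n := u) \<in> ?E \<longleftrightarrow> (\<forall>j<Suc n. partial_sum w j < y) \<and> partial_sum w n + u \<in> {a<..b}"
        using upd_space[OF w, of u] by (auto simp: ps_upd_le ps_upd_Suc less_Suc_eq_le)
      then show ?thesis unfolding c_def indicator_def by auto
    qed
    have "(\<integral>\<^sup>+u. indicator ?E (w(n := u)) \<partial>step_dist) = c * (\<integral>\<^sup>+u. indicator {a<..b} (partial_sum w n + u) \<partial>step_dist)"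
      unfolding e by (rule nn_integral_cmult) measurable
    also have "\<dots> \<le> c * (ennreal (b - a) * indicator {a - 1<..} (partial_sum w n))"
      by (intro mult_left_mono inner_bound ab) simp
    also have "\<dots> = ennreal (b - a) * indicator ?G w"
      using w unfolding c_def indicator_def by auto
    finally show "(\<integral>\<^sup>+u. indicator ?E (w(n := u)) \<partial>step_dist) \<le> ennreal (b - a) * indicator ?G w" .
  qed
  also have "\<dots> = ennreal (b - a) * emeasure (walk_space n) ?G"
    using Gm by (simp add: nn_integral_cmult)
  finally show ?thesis .
qed

lemma ps_Suc: "partial_sum w (Suc n) = partial_sum w n + w n"
  by (simp add: partial_sum_def)

lemma pI: "ennreal (7/64) \<le> emeasure step_dist {7/8<..1}"
proof -
  have "emeasure step_dist {7/8<..1} = (\<integral>\<^sup>+u. indicator {7/8<..1::real} u \<partial>step_dist)"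
    by simp
  also have "\<dots> = (\<integral>\<^sup>+u. ennreal (step_density u) * indicator {7/8<..1::real} u \<partial>lborel)"
    by (rule nn_step) measurable
  also have "\<dots> \<ge> (\<integral>\<^sup>+u. ennreal (7/8) * indicator {7/8<..1::real} u \<partial>lborel)"
  proof (intro nn_integral_mono)
    fix u :: real
    show "ennreal (7/8) * indicator {7/8<..1::real} u \<le> ennreal (step_density u) * indicator {7/8<..1::real} u"
    proof (cases "u \<in> {7/8<..1}")
      case True
      then have "7/8 \<le> exp (u - 1)" using exp_ge_add_one_self[of "u - 1"] by simp
      then show ?thesis using True by (simp add: step_density_def)
    qed simp
  qed
  moreover have "(\<integral>\<^sup>+u. ennreal (7/8) * indicator {7/8<..1::real} u \<partial>lborel) = ennreal (7/64)"
    by (simp add: nn_integral_cmult ennreal_mult[symmetric])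
  ultimately show ?thesis by simp
qed

lemma ind_iff: "(x \<in> A \<longleftrightarrow> y \<in> B \<and> z \<in> C) \<Longrightarrow> indicator A x = (indicator B y * indicator C z :: ennreal)"
  by (auto simp: indicator_def)

lemma ind_mono: "(x \<in> A \<Longrightarrow> y \<in> B \<Longrightarrow> z \<in> C) \<Longrightarrow> indicator A x * indicator B y \<le> (indicator C z :: ennreal)"
  by (auto simp: indicator_def)

lemma two_step:
  assumes a: "y - 1/8 \<le> a"
  shows "emeasure (walk_space n) {w \<in> space (walk_space n). (\<forall>j<Suc n. partial_sum w j < y) \<and> a - 1 < partial_sum w n} * ennreal (7/64) * ennreal (7/64)
    \<le> emeasure (walk_space (Suc (Suc n))) {w \<in> space (walk_space (Suc (Suc n))). 1/2 < gap (Suc (Suc n)) w \<and> partial_sum w (Suc (Suc n)) \<in> {y + 5/8<..y + 2}}"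
    (is "emeasure _ ?G * _ * _ \<le> emeasure _ ?H")
proof -
  let ?I = "{7/8<..1::real}"
  let ?G1 = "{w \<in> space (walk_space (Suc n)). ((\<forall>j<Suc n. partial_sum w j < y) \<and> a - 1 < partial_sum w n) \<and> w n \<in> ?I}"
  have [measurable]: "Measurable.pred (walk_space (Suc n)) (\<lambda>w. \<forall>j<Suc n. partial_sum w j < y)"
    by (rule pred_below) simp
  have [measurable]: "Measurable.pred (walk_space n) (\<lambda>w. \<forall>j<Suc n. partial_sum w j < y)"
    by (rule pred_below) simp
  have [measurable]: "(\<lambda>w. w n) \<in> borel_measurable (walk_space (Suc n))"
  proof -
    have e: "(\<lambda>w. w n) = (\<lambda>w. partial_sum w (Suc n) - partial_sum w n)" by (simp add: ps_Suc)
    note ps_meas[of "Suc n" "Suc n", measurable] ps_meas[of n "Suc n", measurable]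
    show ?thesis unfolding e by measurable
  qed
  have Gm: "?G \<in> sets (walk_space n)" by measurable
  have G1m: "?G1 \<in> sets (walk_space (Suc n))" by measurable
  have Hm: "?H \<in> sets (walk_space (Suc (Suc n)))" by measurable
  have "emeasure (walk_space (Suc n)) ?G1 = (\<integral>\<^sup>+w. indicator ?G1 w \<partial>walk_space (Suc n))"
    using G1m by simp
  also have "\<dots> = (\<integral>\<^sup>+w. (\<integral>\<^sup>+v. indicator ?G1 (w(n := v)) \<partial>step_dist) \<partial>walk_space n)"
    by (rule walk_split) (use G1m in simp)
  also have "\<dots> = (\<integral>\<^sup>+w. indicator ?G w * emeasure step_dist ?I \<partial>walk_space n)"
  proof (intro nn_integral_cong)
    fix w assume w: "w \<in> space (walk_space n)"
    have eq: "indicator ?G1 (w(n := v)) = (indicator ?G w * indicator ?I v :: ennreal)" for v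
    proof (rule ind_iff)
      show "w(n := v) \<in> ?G1 \<longleftrightarrow> w \<in> ?G \<and> v \<in> ?I"
        using upd_space[OF w, of v] w by (auto simp: ps_upd_le less_Suc_eq_le)
    qed
    have "(\<integral>\<^sup>+v. indicator ?G1 (w(n := v)) \<partial>step_dist) = (\<integral>\<^sup>+v. indicator ?G w * indicator ?I v \<partial>step_dist)"
      by (simp only: eq)
    also have "\<dots> = indicator ?G w * emeasure step_dist ?I"
      by (rule nn_integral_cmult_indicator) simp
    finally show "(\<integral>\<^sup>+v. indicator ?G1 (w(n := v)) \<partial>step_dist) = indicator ?G w * emeasure step_dist ?I" .
  qed
  also have "\<dots> = emeasure (walk_space n) ?G * emeasure step_dist ?I"
    by (subst nn_integral_multc) (auto intro: borel_measurable_indicator[OF Gm] simp: nn_integral_indicator[OF Gm])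
  finally have G1eq: "emeasure (walk_space (Suc n)) ?G1 = emeasure (walk_space n) ?G * emeasure step_dist ?I" .
  have "emeasure (walk_space n) ?G * ennreal (7/64) * ennreal (7/64) \<le> emeasure (walk_space n) ?G * emeasure step_dist ?I * emeasure step_dist ?I"
    by (intro mult_mono pI) auto
  also have "\<dots> = emeasure (walk_space (Suc n)) ?G1 * emeasure step_dist ?I"
    by (simp only: G1eq)
  also have "\<dots> = (\<integral>\<^sup>+w. indicator ?G1 w * emeasure step_dist ?I \<partial>walk_space (Suc n))"
    by (subst nn_integral_multc) (auto intro: borel_measurable_indicator[OF G1m] simp: nn_integral_indicator[OF G1m])
  also have "\<dots> = (\<integral>\<^sup>+w. (\<integral>\<^sup>+u. indicator ?G1 w * indicator ?I u \<partial>step_dist) \<partial>walk_space (Suc n))"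
    by (intro nn_integral_cong) (rule nn_integral_cmult_indicator[symmetric], simp)
  also have "\<dots> \<le> (\<integral>\<^sup>+w. (\<integral>\<^sup>+u. indicator ?H (w(Suc n := u)) \<partial>step_dist) \<partial>walk_space (Suc n))"
  proof (intro nn_integral_mono)
    fix w u assume w: "w \<in> space (walk_space (Suc n))"
    show "indicator ?G1 w * indicator ?I u \<le> (indicator ?H (w(Suc n := u)) :: ennreal)"
    proof (rule ind_mono)
      assume T1: "w \<in> ?G1" and T2: "u \<in> ?I"
      let ?w = "w(Suc n := u)"
      have below: "\<forall>j<Suc n. partial_sum w j < y" and an: "a - 1 < partial_sum w n" and wn: "7/8 < w n" "w n \<le> 1"
        and u: "7/8 < u" "u \<le> 1" using T1 T2 by auto
      have S2: "partial_sum ?w (Suc (Suc n)) = partial_sum w n + w n + u"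
        using ps_upd_Suc[of w "Suc n" u] ps_Suc[of w n] by simp
      have Sle: "partial_sum ?w j = partial_sum w j" if "j \<le> Suc n" for j
        using that by (rule ps_upd_le)
      have "\<forall>j\<in>{..<Suc (Suc n)}. partial_sum ?w j < partial_sum ?w (Suc (Suc n)) - 1/2"
      proof
        fix j assume "j \<in> {..<Suc (Suc n)}"
        then have "j < Suc n \<or> j = Suc n" by auto
        then show "partial_sum ?w j < partial_sum ?w (Suc (Suc n)) - 1/2"
        proof
          assume j: "j < Suc n"
          then have e1: "partial_sum ?w j = partial_sum w j" using Sle by simp
          have "partial_sum w j < y" using below j by blast
          then show ?thesis using e1 S2 an wn(1) u(1) a by linarith
        next
          assume j: "j = Suc n"
          then have "partial_sum ?w j = partial_sum w n + w n" using Sle by (simp add: ps_Suc)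
          then show ?thesis using S2 u by simp
        qed
      qed
      then have "Max ((\<lambda>j. partial_sum ?w j) ` {..<Suc (Suc n)}) < partial_sum ?w (Suc (Suc n)) - 1/2"
        by (subst Max_less_iff) auto
      then have g: "1/2 < gap (Suc (Suc n)) ?w" unfolding gap_def by simp
      have "partial_sum w n < y" using below by simp
      then have "partial_sum ?w (Suc (Suc n)) \<in> {y + 5/8<..y + 2}" using S2 an wn u a by auto
      then show "?w \<in> ?H" using g upd_space[of w "Suc n" u] w by auto
    qed
  qed
  also have "\<dots> = (\<integral>\<^sup>+w. indicator ?H w \<partial>walk_space (Suc (Suc n)))"
    by (rule walk_split[symmetric]) (use Hm in simp)
  also have "\<dots> = emeasure (walk_space (Suc (Suc n))) ?H"
    using Hm by simp
  finally show ?thesis .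
qed

lemma H_bound:
  assumes y: "0 \<le> y"
  shows "of_nat (Suc (Suc n)) * emeasure (walk_space (Suc (Suc n))) {w \<in> space (walk_space (Suc (Suc n))). 1/2 < gap (Suc (Suc n)) w \<and> partial_sum w (Suc (Suc n)) \<in> {y + 5/8<..y + 2}}
    \<le> 2 * (\<integral>\<^sup>+s. ennreal (f_dens (Suc (Suc n)) s) * (ennreal s * indicator {y + 5/8<..y + 2} s) \<partial>lborel)"
    (is "_ * emeasure _ ?H \<le> _")
proof -
  let ?m = "Suc (Suc n)"
  let ?J = "{y + 5/8<..y + 2}"
  have Hm: "?H \<in> sets (walk_space ?m)" by measurable
  have "emeasure (walk_space ?m) ?H = (\<integral>\<^sup>+w. indicator ?H w \<partial>walk_space ?m)"
    using Hm by simp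
  also have "\<dots> \<le> (\<integral>\<^sup>+w. 2 * (ennreal (max 0 (gap ?m w)) * indicator ?J (partial_sum w ?m)) \<partial>walk_space ?m)"
  proof (intro nn_integral_mono)
    fix w
    show "indicator ?H w \<le> 2 * (ennreal (max 0 (gap ?m w)) * indicator ?J (partial_sum w ?m))"
    proof (cases "w \<in> ?H")
      case True
      then have "1/2 < gap ?m w" "partial_sum w ?m \<in> ?J" by auto
      then have "(1::real) \<le> 2 * max 0 (gap ?m w)" by simp
      then have "ennreal 1 \<le> ennreal (2 * max 0 (gap ?m w))" by (rule ennreal_leI)
      also have "\<dots> = 2 * ennreal (max 0 (gap ?m w))" by (simp add: ennreal_mult)
      finally show ?thesis using True \<open>partial_sum w ?m \<in> ?J\<close> by simp
    qed simp
  qed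
  also have "\<dots> = 2 * (\<integral>\<^sup>+w. ennreal (max 0 (gap ?m w)) * indicator ?J (partial_sum w ?m) \<partial>walk_space ?m)"
    by (rule nn_integral_cmult) measurable
  finally have "of_nat ?m * emeasure (walk_space ?m) ?H \<le> of_nat ?m * (2 * (\<integral>\<^sup>+w. ennreal (max 0 (gap ?m w)) * indicator ?J (partial_sum w ?m) \<partial>walk_space ?m))"
    by (rule mult_left_mono) simp
  also have "\<dots> = 2 * (of_nat ?m * (\<integral>\<^sup>+w. ennreal (max 0 (gap ?m w)) * indicator ?J (partial_sum w ?m) \<partial>walk_space ?m))"
    by (simp add: ac_simps)
  also have "\<dots> = 2 * (\<integral>\<^sup>+w. ennreal (partial_sum w ?m) * indicator ?J (partial_sum w ?m) \<partial>walk_space ?m)"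
    using y by (subst gap_identity) auto
  also have "\<dots> = 2 * (\<integral>\<^sup>+s. ennreal (f_dens ?m s) * (ennreal s * indicator ?J s) \<partial>lborel)"
    by (subst ps_density[where g="\<lambda>s. ennreal s * indicator ?J s"]) auto
  finally show ?thesis .
qed


lemma f_ratio:
  fixes k :: nat and y s :: real
  assumes k: "3 \<le> k" and y: "0 \<le> y" and yk: "y + 1 < real k / 2" and s1: "y + 5/8 < s" and s2: "s \<le> y + 2"
  shows "f_dens (Suc k) s \<le> 20 * f_dens k y"
proof -
  define d where "d = real k - y"
  define t where "t = real k + 1 - s"
  have dpos: "real k / 2 + 1 < d" using yk unfolding d_def by simp
  have d0: "0 < d" using dpos by simp
  have t0: "0 < t" using s2 yk unfolding t_def by simp
  have td: "t \<le> d + 3/8" using s1 unfolding t_def d_def by simp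
  have tk: "t \<le> real k + 1" using s1 y unfolding t_def by simp
  have dt: "d - 1 \<le> t" using s2 unfolding t_def d_def by simp
  have f1: "f_dens (Suc k) s = t ^ k / (exp t * fact k)"
    using s2 yk unfolding f_dens_def t_def by (simp add: ac_simps)
  have f2: "f_dens k y = d ^ (k - 1) / (exp d * fact (k - 1))"
    using yk unfolding f_dens_def d_def by simp
  have "(1 + 3 / (8 * d)) ^ (k - 1) \<le> exp (3 / (8 * d)) ^ (k - 1)"
    by (intro power_mono exp_ge_add_one_self) (use d0 in simp)
  also have "\<dots> = exp (real (k - 1) * (3 / (8 * d)))"
    by (rule exp_of_nat_mult[symmetric])
  also have "\<dots> \<le> exp (3/4)"
  proof -
    have "real (k - 1) \<le> 2 * d" using dpos k by (simp add: of_nat_diff)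
    then have "real (k - 1) * (3 / (8 * d)) \<le> 2 * d * (3 / (8 * d))"
      by (intro mult_right_mono) (use d0 in simp_all)
    also have "\<dots> = 3/4" using d0 by simp
    finally show ?thesis by simp
  qed
  finally have p1: "(1 + 3 / (8 * d)) ^ (k - 1) \<le> exp (3/4)" .
  have "(d + 3/8) ^ (k - 1) = d ^ (k - 1) * (1 + 3 / (8 * d)) ^ (k - 1)"
  proof -
    have "d + 3/8 = d * (1 + 3 / (8 * d))" using d0 by (simp add: field_simps)
    then show ?thesis by (simp add: power_mult_distrib)
  qed
  also have "\<dots> \<le> d ^ (k - 1) * exp (3/4)"
    by (intro mult_left_mono p1) (use d0 in simp)
  finally have p2: "(d + 3/8) ^ (k - 1) \<le> d ^ (k - 1) * exp (3/4)" .
  have "t ^ k = t * t ^ (k - 1)" using k by (cases k) auto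
  also have "\<dots> \<le> (real k + 1) * (d ^ (k - 1) * exp (3/4))"
  proof (intro mult_mono tk)
    show "t ^ (k - 1) \<le> d ^ (k - 1) * exp (3/4)"
      using power_mono[OF td, of "k - 1"] t0 p2 by linarith
  qed (use t0 d0 in auto)
  finally have A: "t ^ k \<le> (real k + 1) * (d ^ (k - 1) * exp (3/4))" .
  have fk: "fact k = real k * fact (k - 1)"
    using k by (cases k) auto
  have "f_dens (Suc k) s \<le> (real k + 1) * (d ^ (k - 1) * exp (3/4)) / (exp (d - 1) * fact k)"
    unfolding f1
    by (intro frac_le A mult_right_mono) (use t0 d0 dt in auto)
  also have "\<dots> = ((real k + 1) / real k) * (exp (3/4) * exp 1) * f_dens k y"
    unfolding f2 fk using k by (simp add: exp_diff field_simps)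
  also have "\<dots> \<le> (4/3) * 9 * f_dens k y"
  proof (intro mult_mono)
    show "(real k + 1) / real k \<le> 4/3" using k by (simp add: field_simps)
    have "exp (3/4) * exp 1 \<le> exp (1::real) * exp 1"
      by (intro mult_right_mono) auto
    also have "\<dots> \<le> 3 * 3" using exp_le by (intro mult_mono) auto
    finally show "exp (3/4) * exp (1::real) \<le> 9" by simp
  qed (auto simp: f_dens_nonneg)
  finally show ?thesis using f_dens_nonneg[of k y] by simp
qed

lemma J_int:
  assumes k: "3 \<le> k" and y: "0 \<le> y" and yk: "y + 1 < real k / 2"
  shows "(\<integral>\<^sup>+s. ennreal (f_dens (Suc k) s) * (ennreal s * indicator {y + 5/8<..y + 2} s) \<partial>lborel)
     \<le> ennreal (20 * f_dens k y * (y + 2) * (11/8))"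
proof -
  let ?J = "{y + 5/8<..y + 2}"
  have "(\<integral>\<^sup>+s. ennreal (f_dens (Suc k) s) * (ennreal s * indicator ?J s) \<partial>lborel)
      \<le> (\<integral>\<^sup>+s. ennreal (20 * f_dens k y * (y + 2)) * indicator ?J s \<partial>lborel)"
  proof (intro nn_integral_mono)
    fix s
    show "ennreal (f_dens (Suc k) s) * (ennreal s * indicator ?J s) \<le> ennreal (20 * f_dens k y * (y + 2)) * indicator ?J s"
    proof (cases "s \<in> ?J")
      case True
      then have s1: "y + 5/8 < s" and s2: "s \<le> y + 2" by auto
      have "f_dens (Suc k) s * s \<le> (20 * f_dens k y) * (y + 2)"
        by (intro mult_mono f_ratio[OF k y yk s1 s2] s2) (use s1 y in \<open>auto simp: f_dens_nonneg\<close>)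
      then have "ennreal (f_dens (Suc k) s * s) \<le> ennreal (20 * f_dens k y * (y + 2))"
        by (intro ennreal_leI) simp
      then show ?thesis using True s1 y by (simp add: ennreal_mult f_dens_nonneg)
    qed simp
  qed
  also have "\<dots> = ennreal (20 * f_dens k y * (y + 2)) * ennreal (11/8)"
    by (subst nn_integral_cmult_indicator) auto
  also have "\<dots> = ennreal (20 * f_dens k y * (y + 2) * (11/8))"
    by (rule ennreal_mult[symmetric]) (use y in \<open>auto simp: f_dens_nonneg\<close>)
  finally show ?thesis .
qed

lemma main_est:
  assumes k: "3 \<le> Suc n" and y: "0 \<le> y" and yk: "y + 1 < real (Suc n) / 2" and a: "y - 1/8 \<le> a" and ab: "a \<le> b"
  shows "measure (walk_space (Suc n)) {w \<in> space (walk_space (Suc n)). (\<forall>j<Suc n. partial_sum w j < y) \<and> partial_sum w (Suc n) \<in> {a<..b}}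
    \<le> (b - a) * (10000 * (y + 1) / real (Suc n) * f_dens (Suc n) y)"
proof -
  interpret P0: prob_space "walk_space n" by (rule prob_space_walk)
  interpret P1: prob_space "walk_space (Suc n)" by (rule prob_space_walk)
  interpret P2: prob_space "walk_space (Suc (Suc n))" by (rule prob_space_walk)
  define E where "E = {w \<in> space (walk_space (Suc n)). (\<forall>j<Suc n. partial_sum w j < y) \<and> partial_sum w (Suc n) \<in> {a<..b}}"
  define G where "G = {w \<in> space (walk_space n). (\<forall>j<Suc n. partial_sum w j < y) \<and> a - 1 < partial_sum w n}"
  define H where "H = {w \<in> space (walk_space (Suc (Suc n))). 1/2 < gap (Suc (Suc n)) w \<and> partial_sum w (Suc (Suc n)) \<in> {y + 5/8<..y + 2}}"
  define fy where "fy = f_dens (Suc n) y"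
  have fy0: "0 \<le> fy" unfolding fy_def by (rule f_dens_nonneg)
  have "ennreal (P1.prob E) \<le> ennreal (b - a) * ennreal (P0.prob G)"
    using last_step[OF ab, of n y] unfolding E_def G_def by (simp add: P0.emeasure_eq_measure P1.emeasure_eq_measure)
  also have "\<dots> = ennreal ((b - a) * P0.prob G)"
    by (rule ennreal_mult[symmetric]) (use ab in auto)
  finally have 1: "P1.prob E \<le> (b - a) * P0.prob G"
    by (subst (asm) ennreal_le_iff) (use ab in auto)
  have "ennreal (P0.prob G * (7/64) * (7/64)) = ennreal (P0.prob G * (7/64)) * ennreal (7/64)"
    by (rule ennreal_mult) auto
  also have "\<dots> = ennreal (P0.prob G) * ennreal (7/64) * ennreal (7/64)"
    by (subst ennreal_mult) auto
  also have "\<dots> \<le> ennreal (P2.prob H)"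
    using two_step[OF a, of n] unfolding G_def H_def by (simp add: P0.emeasure_eq_measure P2.emeasure_eq_measure)
  finally have 2: "P0.prob G * (7/64) * (7/64) \<le> P2.prob H"
    by (subst (asm) ennreal_le_iff) auto
  have "ennreal (real (Suc (Suc n)) * P2.prob H) = of_nat (Suc (Suc n)) * emeasure (walk_space (Suc (Suc n))) H"
    by (simp add: P2.emeasure_eq_measure ennreal_mult ennreal_of_nat_eq_real_of_nat)
  also have "\<dots> \<le> 2 * (\<integral>\<^sup>+s. ennreal (f_dens (Suc (Suc n)) s) * (ennreal s * indicator {y + 5/8<..y + 2} s) \<partial>lborel)"
    unfolding H_def by (rule H_bound[OF y])
  also have "\<dots> \<le> 2 * ennreal (20 * fy * (y + 2) * (11/8))"
    unfolding fy_def by (intro mult_left_mono J_int[OF k y yk]) auto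
  also have "\<dots> = ennreal (2 * (20 * fy * (y + 2) * (11/8)))"
    by (subst ennreal_mult) (use fy0 y in auto)
  also have "2 * (20 * fy * (y + 2) * (11/8)) = 55 * fy * (y + 2)" by simp
  finally have 3: "real (Suc (Suc n)) * P2.prob H \<le> 55 * fy * (y + 2)"
    by (subst (asm) ennreal_le_iff) (use fy0 y in auto)
  define Q where "Q = fy * (y + 1) / real (Suc n)"
  have Q0: "0 \<le> Q" unfolding Q_def using fy0 y by simp
  have mH: "P2.prob H \<le> 55 * fy * (y + 2) / real (Suc (Suc n))"
    using 3 by (simp add: pos_le_divide_eq mult.commute)
  have ratio: "(y + 2) / real (Suc (Suc n)) \<le> (2 * y + 2) / real (Suc n)"
    by (rule frac_le) (use y in auto)
  have "55 * fy * (y + 2) / real (Suc (Suc n)) = 55 * fy * ((y + 2) / real (Suc (Suc n)))" by simp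
  also have "\<dots> \<le> 55 * fy * ((2 * y + 2) / real (Suc n))"
    by (intro mult_left_mono ratio) (use fy0 in simp)
  also have "\<dots> = 110 * Q" unfolding Q_def by (simp add: field_simps)
  finally have mH2: "P2.prob H \<le> 110 * Q" using mH by linarith
  have mG: "P0.prob G \<le> 10000 * Q"
    using 2 mH2 Q0 by linarith
  have "P1.prob E \<le> (b - a) * (10000 * Q)"
    using 1 mG ab by (meson diff_ge_0_iff_ge mult_left_mono order_trans)
  also have "(b - a) * (10000 * Q) = (b - a) * (10000 * (y + 1) / real (Suc n) * f_dens (Suc n) y)"
    unfolding Q_def fy_def by (simp add: field_simps)
  finally show ?thesis unfolding E_def .
qed

lemma deriv_bound:
  fixes F :: "real \<Rightarrow> real"
  assumes D: "(F has_real_derivative D) (at_left x0) \<or> (F has_real_derivative D) (at_right x0)"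
    and \<delta>: "0 < \<delta>"
    and R: "\<And>h. 0 < h \<Longrightarrow> h < \<delta> \<Longrightarrow> F (x0 + h) - F x0 \<le> K * h"
    and L: "\<And>h. 0 < h \<Longrightarrow> h < \<delta> \<Longrightarrow> F x0 - F (x0 - h) \<le> K * h"
  shows "D \<le> K"
  using D
proof
  assume "(F has_real_derivative D) (at_left x0)"
  then have lim: "((\<lambda>x. (F x - F x0) / (x - x0)) \<longlongrightarrow> D) (at_left x0)"
    by (simp add: has_field_derivative_iff)
  have ev: "eventually (\<lambda>x. K \<ge> (F x - F x0) / (x - x0)) (at_left x0)"
    unfolding eventually_at_left_field
  proof (intro exI[of _ "x0 - \<delta>"] conjI allI impI)
    show "x0 - \<delta> < x0" using \<delta> by simp
    fix x assume x: "x0 - \<delta> < x" "x < x0"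
    have "F x0 - F (x0 - (x0 - x)) \<le> K * (x0 - x)" using x by (intro L) auto
    then have "F x0 - F x \<le> K * (x0 - x)" by simp
    then have "(F x0 - F x) / (x0 - x) \<le> K" using x by (simp add: divide_le_eq)
    moreover have "(F x - F x0) / (x - x0) = (F x0 - F x) / (x0 - x)"
      by (simp add: divide_simps) (simp add: algebra_simps)
    ultimately show "(F x - F x0) / (x - x0) \<le> K" by simp
  qed
  show "D \<le> K" by (rule tendsto_upperbound[OF lim ev]) simp
next
  assume "(F has_real_derivative D) (at_right x0)"
  then have lim: "((\<lambda>x. (F x - F x0) / (x - x0)) \<longlongrightarrow> D) (at_right x0)"
    by (simp add: has_field_derivative_iff)
  have ev: "eventually (\<lambda>x. K \<ge> (F x - F x0) / (x - x0)) (at_right x0)"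
    unfolding eventually_at_right_field
  proof (intro exI[of _ "x0 + \<delta>"] conjI allI impI)
    show "x0 < x0 + \<delta>" using \<delta> by simp
    fix x assume x: "x0 < x" "x < x0 + \<delta>"
    have "F (x0 + (x - x0)) - F x0 \<le> K * (x - x0)" using x by (intro R) auto
    then have "F x - F x0 \<le> K * (x - x0)" by simp
    then show "(F x - F x0) / (x - x0) \<le> K" using x by (simp add: divide_le_eq)
  qed
  show "D \<le> K" by (rule tendsto_upperbound[OF lim ev]) simp
qed

lemma cdf_diff:
  assumes "x0 \<le> x1"
  shows "walk_cdf k y x1 - walk_cdf k y x0 = measure (walk_space k) {w \<in> space (walk_space k). (\<forall>j<k. partial_sum w j < y) \<and> partial_sum w k \<in> {x0<..x1}}"
proof -
  interpret P: prob_space "walk_space k" by (rule prob_space_walk)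
  have [measurable]: "Measurable.pred (walk_space k) (\<lambda>w. \<forall>j<k. partial_sum w j < y)"
    by (rule pred_below) simp
  note ps_meas[of k k, measurable]
  let ?A = "\<lambda>x. {w \<in> space (walk_space k). (\<forall>j<k. partial_sum w j < y) \<and> partial_sum w k \<le> x}"
  have m: "?A x \<in> sets (walk_space k)" for x by measurable
  have e: "{w \<in> space (walk_space k). (\<forall>j<k. partial_sum w j < y) \<and> partial_sum w k \<in> {x0<..x1}} = ?A x1 - ?A x0"
    using assms by auto
  have sub: "?A x0 \<subseteq> ?A x1" using assms by auto
  show ?thesis unfolding e walk_cdf_def
    by (rule P.finite_measure_Diff[OF m m sub, symmetric])
qed

lemma S_bound:
  assumes k: "1 \<le> k" and x: "x0 < x1" and M: "\<And>s. x0 < s \<Longrightarrow> s \<le> x1 \<Longrightarrow> f_dens k s \<le> M"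
  shows "measure (walk_space k) {w \<in> space (walk_space k). (\<forall>j<k. partial_sum w j < y) \<and> partial_sum w k \<in> {x0<..x1}} \<le> (x1 - x0) * M"
proof -
  interpret P: prob_space "walk_space k" by (rule prob_space_walk)
  have [measurable]: "Measurable.pred (walk_space k) (\<lambda>w. \<forall>j<k. partial_sum w j < y)"
    by (rule pred_below) simp
  note ps_meas[of k k, measurable]
  have M0: "0 \<le> M" using M[of x1] f_dens_nonneg[of k x1] x by auto
  let ?E = "{w \<in> space (walk_space k). (\<forall>j<k. partial_sum w j < y) \<and> partial_sum w k \<in> {x0<..x1}}"
  let ?S = "{w \<in> space (walk_space k). partial_sum w k \<in> {x0<..x1}}"
  have "P.prob ?E \<le> P.prob ?S"
    by (rule P.finite_measure_mono) (auto, measurable)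
  moreover have "emeasure (walk_space k) ?S \<le> ennreal ((x1 - x0) * M)"
  proof -
    have Sm: "?S \<in> sets (walk_space k)" by measurable
    have "emeasure (walk_space k) ?S = (\<integral>\<^sup>+w. indicator ?S w \<partial>walk_space k)"
      by (rule nn_integral_indicator[OF Sm, symmetric])
    also have "\<dots> = (\<integral>\<^sup>+w. indicator {x0<..x1} (partial_sum w k) \<partial>walk_space k)"
      by (intro nn_integral_cong) (simp add: indicator_def)
    also have "\<dots> = (\<integral>\<^sup>+s. ennreal (f_dens k s) * indicator {x0<..x1} s \<partial>lborel)"
      by (rule ps_density[OF k]) measurable
    also have "\<dots> \<le> (\<integral>\<^sup>+s. ennreal M * indicator {x0<..x1} s \<partial>lborel)"
      by (intro nn_integral_mono) (auto intro!: ennreal_leI M split: split_indicator)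
    also have "\<dots> = ennreal M * ennreal (x1 - x0)"
      using x by (subst nn_integral_cmult_indicator) auto
    also have "\<dots> = ennreal ((x1 - x0) * M)"
      using M0 x by (simp add: ennreal_mult[symmetric] mult.commute)
    finally show ?thesis .
  qed
  then have "P.prob ?S \<le> (x1 - x0) * M"
    using M0 x by (simp add: P.emeasure_eq_measure)
  ultimately show ?thesis by linarith
qed

lemma f_usc:
  assumes e: "0 < e"
  shows "\<exists>d>0. \<forall>s. \<bar>s - x0\<bar> < d \<longrightarrow> f_dens k s \<le> f_dens k x0 + e"
proof (cases "x0 \<le> real k")
  case True
  define g where "g s = max 0 ((real k - s) ^ (k - 1) / (exp (real k - s) * fact (k - 1)))" for s
  have fg: "f_dens k s \<le> g s" for s
    unfolding g_def f_dens_def by auto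
  have gx: "g x0 = f_dens k x0"
    using True unfolding g_def f_dens_def by (simp add: max_def)
  have "isCont g x0" unfolding g_def by (intro continuous_intros) auto
  then have "g \<midarrow>x0\<rightarrow> g x0" by (simp add: isCont_def)
  then obtain d where d: "d > 0" "\<And>s. s \<noteq> x0 \<Longrightarrow> norm (s - x0) < d \<Longrightarrow> norm (g s - g x0) < e"
    using e unfolding LIM_eq by blast
  show ?thesis
  proof (intro exI[of _ d] conjI allI impI d(1))
    fix s assume s: "\<bar>s - x0\<bar> < d"
    show "f_dens k s \<le> f_dens k x0 + e"
    proof (cases "s = x0")
      case False
      then have "\<bar>g s - g x0\<bar> < e" using d(2)[of s] s by simp
      then show ?thesis using fg[of s] gx by linarith
    qed (use e in simp)
  qed
next
  case False
  show ?thesis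
  proof (intro exI[of _ "x0 - real k"] conjI allI impI)
    show "0 < x0 - real k" using False by simp
    fix s assume "\<bar>s - x0\<bar> < x0 - real k"
    then have "f_dens k s = 0" "f_dens k x0 = 0" using False by (auto simp: f_dens_def)
    then show "f_dens k s \<le> f_dens k x0 + e" using e by simp
  qed
qed

lemma f_shift:
  assumes mu: "0 \<le> \<mu>" "\<mu> \<le> 1"
  shows "f_dens k (y + \<mu>) \<le> exp 1 * f_dens k y"
proof (cases "y + \<mu> \<le> real k")
  case True
  have "f_dens k (y + \<mu>) = (real k - y - \<mu>) ^ (k - 1) / (exp (real k - y - \<mu>) * fact (k - 1))"
    using True by (simp add: f_dens_def diff_diff_eq)
  also have "\<dots> \<le> (real k - y) ^ (k - 1) / (exp (real k - y - 1) * fact (k - 1))"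
    by (intro frac_le power_mono mult_right_mono) (use True mu in auto)
  also have "\<dots> = exp 1 * f_dens k y"
    using True mu by (simp add: f_dens_def exp_diff field_simps exp_add[symmetric])
  finally show ?thesis .
next
  case False
  then show ?thesis by (simp add: f_dens_def f_dens_nonneg[of k y, unfolded f_dens_def])
qed

theorem lemma5:
  "\<exists>C>0. \<forall>k::nat. \<forall>y::real. \<forall>\<mu>::real. \<forall>D::real.
     k \<ge> 1 \<and> y \<ge> 0 \<and> 0 \<le> \<mu> \<and> \<mu> \<le> 1 \<and>
     ((walk_cdf k y has_real_derivative D) (at_left (y + \<mu>)) \<or>
      (walk_cdf k y has_real_derivative D) (at_right (y + \<mu>)))
     \<longrightarrow> D \<le> C * (y + 1) / real k * f_dens k y"
proof (intro exI[of _ "10000::real"] conjI allI impI)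
  show "(0::real) < 10000" by simp
  fix k :: nat and y \<mu> D :: real
  assume A: "k \<ge> 1 \<and> y \<ge> 0 \<and> 0 \<le> \<mu> \<and> \<mu> \<le> 1 \<and>
     ((walk_cdf k y has_real_derivative D) (at_left (y + \<mu>)) \<or>
      (walk_cdf k y has_real_derivative D) (at_right (y + \<mu>)))"
  then have k: "1 \<le> k" and y: "0 \<le> y" and mu0: "0 \<le> \<mu>" and mu1: "\<mu> \<le> 1"
    and DD: "(walk_cdf k y has_real_derivative D) (at_left (y + \<mu>)) \<or>
      (walk_cdf k y has_real_derivative D) (at_right (y + \<mu>))" by auto
  let ?T = "10000 * (y + 1) / real k * f_dens k y"
  show "D \<le> ?T"
  proof (cases "3 \<le> k \<and> y + 1 < real k / 2")
    case True
    obtain n where kn: "k = Suc n" using k by (cases k) auto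
    have k3: "3 \<le> Suc n" and yk: "y + 1 < real (Suc n) / 2" using True kn by auto
    show ?thesis
    proof (rule deriv_bound[OF DD, of "1/8"])
      show "0 < (1/8::real)" by simp
    next
      fix h :: real assume h: "0 < h" "h < 1/8"
      have "walk_cdf k y (y + \<mu> + h) - walk_cdf k y (y + \<mu>)
          = measure (walk_space k) {w \<in> space (walk_space k). (\<forall>j<k. partial_sum w j < y) \<and> partial_sum w k \<in> {y + \<mu><..y + \<mu> + h}}"
        by (rule cdf_diff) (use h in simp)
      also have "\<dots> \<le> (y + \<mu> + h - (y + \<mu>)) * (10000 * (y + 1) / real (Suc n) * f_dens (Suc n) y)"
        unfolding kn by (rule main_est[OF k3 y yk]) (use h mu0 in auto)
      also have "\<dots> = ?T * h" unfolding kn by simp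
      finally show "walk_cdf k y (y + \<mu> + h) - walk_cdf k y (y + \<mu>) \<le> ?T * h" .
    next
      fix h :: real assume h: "0 < h" "h < 1/8"
      have "walk_cdf k y (y + \<mu>) - walk_cdf k y (y + \<mu> - h)
          = measure (walk_space k) {w \<in> space (walk_space k). (\<forall>j<k. partial_sum w j < y) \<and> partial_sum w k \<in> {y + \<mu> - h<..y + \<mu>}}"
        by (rule cdf_diff) (use h in simp)
      also have "\<dots> \<le> (y + \<mu> - (y + \<mu> - h)) * (10000 * (y + 1) / real (Suc n) * f_dens (Suc n) y)"
        unfolding kn by (rule main_est[OF k3 y yk]) (use h mu0 in auto)
      also have "\<dots> = ?T * h" unfolding kn by simp
      finally show "walk_cdf k y (y + \<mu>) - walk_cdf k y (y + \<mu> - h) \<le> ?T * h" .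
    qed
  next
    case False
    have half: "1/2 \<le> (y + 1) / real k"
    proof (cases "k \<le> 2")
      case True
      then have "real k \<le> 2" by simp
      then show ?thesis using y k by (simp add: field_simps)
    next
      case False
      then have "real k / 2 \<le> y + 1" using \<open>\<not> (3 \<le> k \<and> y + 1 < real k / 2)\<close> by auto
      then show ?thesis using k by (simp add: field_simps)
    qed
    have "D \<le> f_dens k (y + \<mu>)"
    proof (rule field_le_epsilon)
      fix e :: real assume e: "0 < e"
      obtain d where d: "d > 0" and dd: "\<And>s. \<bar>s - (y + \<mu>)\<bar> < d \<Longrightarrow> f_dens k s \<le> f_dens k (y + \<mu>) + e"
        using f_usc[OF e, of "y + \<mu>" k] by blast
      show "D \<le> f_dens k (y + \<mu>) + e"
      proof (rule deriv_bound[OF DD d])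
        fix h :: real assume h: "0 < h" "h < d"
        have "walk_cdf k y (y + \<mu> + h) - walk_cdf k y (y + \<mu>)
            = measure (walk_space k) {w \<in> space (walk_space k). (\<forall>j<k. partial_sum w j < y) \<and> partial_sum w k \<in> {y + \<mu><..y + \<mu> + h}}"
          by (rule cdf_diff) (use h in simp)
        also have "\<dots> \<le> (y + \<mu> + h - (y + \<mu>)) * (f_dens k (y + \<mu>) + e)"
          by (rule S_bound[OF k]) (use h in \<open>auto intro!: dd\<close>)
        finally show "walk_cdf k y (y + \<mu> + h) - walk_cdf k y (y + \<mu>) \<le> (f_dens k (y + \<mu>) + e) * h"
          by (simp add: mult.commute)
      next
        fix h :: real assume h: "0 < h" "h < d"
        have "walk_cdf k y (y + \<mu>) - walk_cdf k y (y + \<mu> - h)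
            = measure (walk_space k) {w \<in> space (walk_space k). (\<forall>j<k. partial_sum w j < y) \<and> partial_sum w k \<in> {y + \<mu> - h<..y + \<mu>}}"
          by (rule cdf_diff) (use h in simp)
        also have "\<dots> \<le> (y + \<mu> - (y + \<mu> - h)) * (f_dens k (y + \<mu>) + e)"
          by (rule S_bound[OF k]) (use h in \<open>auto intro!: dd\<close>)
        finally show "walk_cdf k y (y + \<mu>) - walk_cdf k y (y + \<mu> - h) \<le> (f_dens k (y + \<mu>) + e) * h"
          by (simp add: mult.commute)
      qed
    qed
    also have "\<dots> \<le> exp 1 * f_dens k y" by (rule f_shift[OF mu0 mu1])
    also have "\<dots> \<le> 3 * f_dens k y" by (intro mult_right_mono exp_le f_dens_nonneg)
    also have "\<dots> \<le> ?T"
    proof -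
      have "3 \<le> 10000 * ((y + 1) / real k)" using half by linarith
      then have "3 * f_dens k y \<le> (10000 * ((y + 1) / real k)) * f_dens k y"
        by (intro mult_right_mono f_dens_nonneg)
      then show ?thesis by simp
    qed
    finally show ?thesis .
  qed
qed

end
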